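(* The categories $\sigma\ell\mathbb{G}$ and $\mathcal{V}_{\sigma\ell\mathbb{G}}$ are isomorphic. More precisely: (i) for every $G\in\mathcal{V}_{\sigma\ell\mathbb{G}}$, the reduct of $G$ to the $\ell$-group operations is a Dedekind $\sigma$-complete $\ell$-group, and every morphism of $\mathcal{V}_{\sigma\ell\mathbb{G}}$ is a $\sigma$-continuous $\ell$-morphism between these reducts; (ii) for every Dedekind $\sigma$-complete $\ell$-group $G$, setting $\bigvee^-(g,f_1,f_2,\dots):=\sup_{n\ge1}\{f_n\wedge g\}$ makes $G$ an object of $\mathcal{V}_{\sigma\ell\mathbb{G}}$, and every $\sigma$-continuous $\ell$-morphism is a morphism of $\mathcal{V}_{\sigma\ell\mathbb{G}}$ for these structures; (iii) the functor $U\colon\mathcal{V}_{\sigma\ell\mathbb{G}}\to\sigma\ell\mathbb{G}$ (forget $\bigvee^-$, identity on maps) and the functor $F\colon\sigma\ell\mathbb{G}\to\mathcal{V}_{\sigma\ell\mathbb{G}}$ (add $\bigvee^-$ as in (ii), identity on maps) are mutually inverse. In particular the category of Dedekind $\sigma$-complete $\ell$-groups is an infinitary variety.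
   Context: An $\ell$-group is Dedekind $\sigma$-complete if every countable subset with an upper bound has a least upper bound. An $\ell$-morphism is $\sigma$-continuous if it preserves all existing suprema of countable families. $\sigma\ell\mathbb{G}$ is the category of Dedekind $\sigma$-complete $\ell$-groups with $\sigma$-continuous $\ell$-morphisms. $\mathcal{V}_{\sigma\ell\mathbb{G}}$ is the infinitary variety of algebras $(G,0,+,-,\vee,\wedge,\bigvee^-)$ where $\bigvee^-$ has countably infinite arity, writing $\bigvee_{n\ge1}^g f_n:=\bigvee^-(g,f_1,f_2,\dots)$, satisfying the $\ell$-group axioms and the equations (A1) $\bigvee_{n\ge1}^g f_n=\bigvee_{n\ge1}^g(f_n\wedge g)$; (A2) $\bigvee_{n\ge1}^g f_n=(f_1\wedge g)\vee\bigvee_{n\ge2}^g f_n$ (where $\bigvee_{n\ge2}^g f_n:=\bigvee^-(g,f_2,f_3,\dots)$); (A3) $\bigvee_{n\ge1}^g(f_n\wedge h)\le h$ (an inequality $a\le b$ meaning the equation $a\wedge b=a$). Morphisms of $\mathcal{V}_{\sigma\ell\mathbb{G}}$ are maps preserving all these operations. *)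

theory Defs
  imports Main
begin

record 'a lgrp =
  carrier :: "'a set"
  zero :: 'a
  add :: "'a \<Rightarrow> 'a \<Rightarrow> 'a"
  neg :: "'a \<Rightarrow> 'a"
  join :: "'a \<Rightarrow> 'a \<Rightarrow> 'a"
  meet :: "'a \<Rightarrow> 'a \<Rightarrow> 'a"

text \<open>Algebras of the infinitary signature: l-group operations plus the
  countably-infinitary operation vsup g f = V^-(g, f 1, f 2, ...), where
  the sequence f_1, f_2, ... is represented as f 0, f 1, ...\<close>
record 'a vsl = "'a lgrp" +
  vsup :: "'a \<Rightarrow> (nat \<Rightarrow> 'a) \<Rightarrow> 'a"

definition lgroup :: "('a, 'm) lgrp_scheme \<Rightarrow> bool" where
  "lgroup G \<longleftrightarrow>
     zero G \<in> carrier G \<and>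
     (\<forall>a\<in>carrier G. \<forall>b\<in>carrier G. add G a b \<in> carrier G \<and> join G a b \<in> carrier G \<and> meet G a b \<in> carrier G) \<and>
     (\<forall>a\<in>carrier G. neg G a \<in> carrier G) \<and>
     (\<forall>a\<in>carrier G. \<forall>b\<in>carrier G. \<forall>c\<in>carrier G. add G (add G a b) c = add G a (add G b c)) \<and>
     (\<forall>a\<in>carrier G. add G (zero G) a = a \<and> add G a (zero G) = a) \<and>
     (\<forall>a\<in>carrier G. add G (neg G a) a = zero G \<and> add G a (neg G a) = zero G) \<and>
     (\<forall>a\<in>carrier G. \<forall>b\<in>carrier G. join G a b = join G b a \<and> meet G a b = meet G b a) \<and>
     (\<forall>a\<in>carrier G. \<forall>b\<in>carrier G. \<forall>c\<in>carrier G.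
        join G (join G a b) c = join G a (join G b c) \<and> meet G (meet G a b) c = meet G a (meet G b c)) \<and>
     (\<forall>a\<in>carrier G. \<forall>b\<in>carrier G. join G a (meet G a b) = a \<and> meet G a (join G a b) = a) \<and>
     (\<forall>a\<in>carrier G. \<forall>b\<in>carrier G. \<forall>c\<in>carrier G.
        add G a (join G b c) = join G (add G a b) (add G a c) \<and>
        add G (join G b c) a = join G (add G b a) (add G c a))"

definition lle :: "('a, 'm) lgrp_scheme \<Rightarrow> 'a \<Rightarrow> 'a \<Rightarrow> bool" where
  "lle G a b \<longleftrightarrow> meet G a b = a"

definition is_ub :: "('a, 'm) lgrp_scheme \<Rightarrow> 'a set \<Rightarrow> 'a \<Rightarrow> bool" where
  "is_ub G A u \<longleftrightarrow> u \<in> carrier G \<and> (\<forall>a\<in>A. lle G a u)"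

definition is_lub :: "('a, 'm) lgrp_scheme \<Rightarrow> 'a set \<Rightarrow> 'a \<Rightarrow> bool" where
  "is_lub G A s \<longleftrightarrow> is_ub G A s \<and> (\<forall>u. is_ub G A u \<longrightarrow> lle G s u)"

definition sigma_complete :: "('a, 'm) lgrp_scheme \<Rightarrow> bool" where
  "sigma_complete G \<longleftrightarrow> lgroup G \<and>
     (\<forall>f :: nat \<Rightarrow> 'a. range f \<subseteq> carrier G \<and> (\<exists>u. is_ub G (range f) u)
        \<longrightarrow> (\<exists>s. is_lub G (range f) s))"

definition l_morphism :: "('a, 'm) lgrp_scheme \<Rightarrow> ('b, 'n) lgrp_scheme \<Rightarrow> ('a \<Rightarrow> 'b) \<Rightarrow> bool" where
  "l_morphism G H h \<longleftrightarrow>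
     (\<forall>a\<in>carrier G. h a \<in> carrier H) \<and>
     h (zero G) = zero H \<and>
     (\<forall>a\<in>carrier G. h (neg G a) = neg H (h a)) \<and>
     (\<forall>a\<in>carrier G. \<forall>b\<in>carrier G.
        h (add G a b) = add H (h a) (h b) \<and>
        h (join G a b) = join H (h a) (h b) \<and>
        h (meet G a b) = meet H (h a) (h b))"

definition sigma_continuous :: "('a, 'm) lgrp_scheme \<Rightarrow> ('b, 'n) lgrp_scheme \<Rightarrow> ('a \<Rightarrow> 'b) \<Rightarrow> bool" where
  "sigma_continuous G H h \<longleftrightarrow> l_morphism G H h \<and>
     (\<forall>(f :: nat \<Rightarrow> 'a) s. range f \<subseteq> carrier G \<and> is_lub G (range f) s
        \<longrightarrow> is_lub H (range (h \<circ> f)) (h s))"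

definition in_variety :: "('a, 'm) vsl_scheme \<Rightarrow> bool" where
  "in_variety V \<longleftrightarrow> lgroup V \<and>
     (\<forall>g\<in>carrier V. \<forall>f. range f \<subseteq> carrier V \<longrightarrow> vsup V g f \<in> carrier V) \<and>
     (\<forall>g\<in>carrier V. \<forall>f. range f \<subseteq> carrier V \<longrightarrow>
        vsup V g f = vsup V g (\<lambda>n. meet V (f n) g)) \<and>
     (\<forall>g\<in>carrier V. \<forall>f. range f \<subseteq> carrier V \<longrightarrow>
        vsup V g f = join V (meet V (f 0) g) (vsup V g (\<lambda>n. f (Suc n)))) \<and>
     (\<forall>g\<in>carrier V. \<forall>h\<in>carrier V. \<forall>f. range f \<subseteq> carrier V \<longrightarrow>
        lle V (vsup V g (\<lambda>n. meet V (f n) h)) h)"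

definition v_morphism :: "('a, 'm) vsl_scheme \<Rightarrow> ('b, 'n) vsl_scheme \<Rightarrow> ('a \<Rightarrow> 'b) \<Rightarrow> bool" where
  "v_morphism V W h \<longleftrightarrow> l_morphism V W h \<and>
     (\<forall>g\<in>carrier V. \<forall>f. range f \<subseteq> carrier V \<longrightarrow> h (vsup V g f) = vsup W (h g) (h \<circ> f))"

definition U_obj :: "'a vsl \<Rightarrow> 'a lgrp" where
  "U_obj V = lgrp.truncate V"

definition sup_op :: "'a lgrp \<Rightarrow> 'a \<Rightarrow> (nat \<Rightarrow> 'a) \<Rightarrow> 'a" where
  "sup_op G g f = (THE s. is_lub G (range (\<lambda>n. meet G (f n) g)) s)"

definition F_obj :: "'a lgrp \<Rightarrow> 'a vsl" where
  "F_obj G = lgrp.extend G (vsl.fields (sup_op G))"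

end

theory Submission
  imports Defs
begin

section \<open>Lattice basics\<close>

lemma lg:
  assumes "lgroup G"
  shows lg_meet_c: "\<And>a b. a \<in> carrier G \<Longrightarrow> b \<in> carrier G \<Longrightarrow> meet G a b \<in> carrier G"
    and lg_join_c: "\<And>a b. a \<in> carrier G \<Longrightarrow> b \<in> carrier G \<Longrightarrow> join G a b \<in> carrier G"
    and lg_jc: "\<And>a b. a \<in> carrier G \<Longrightarrow> b \<in> carrier G \<Longrightarrow> join G a b = join G b a"
    and lg_mc: "\<And>a b. a \<in> carrier G \<Longrightarrow> b \<in> carrier G \<Longrightarrow> meet G a b = meet G b a"
    and lg_ja: "\<And>a b c. a \<in> carrier G \<Longrightarrow> b \<in> carrier G \<Longrightarrow> c \<in> carrier G \<Longrightarrow> join G (join G a b) c = join G a (join G b c)"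
    and lg_ma: "\<And>a b c. a \<in> carrier G \<Longrightarrow> b \<in> carrier G \<Longrightarrow> c \<in> carrier G \<Longrightarrow> meet G (meet G a b) c = meet G a (meet G b c)"
    and lg_ab1: "\<And>a b. a \<in> carrier G \<Longrightarrow> b \<in> carrier G \<Longrightarrow> join G a (meet G a b) = a"
    and lg_ab2: "\<And>a b. a \<in> carrier G \<Longrightarrow> b \<in> carrier G \<Longrightarrow> meet G a (join G a b) = a"
  using assms unfolding lgroup_def by blast+

lemma meet_idem: "lgroup G \<Longrightarrow> a \<in> carrier G \<Longrightarrow> meet G a a = a"
proof -
  assume L: "lgroup G" and a: "a \<in> carrier G"
  have "meet G a a = meet G a (join G a (meet G a a))" using lg_ab1[OF L a a] by simp
  also have "\<dots> = a" using lg_ab2[OF L a lg_meet_c[OF L a a]] .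
  finally show ?thesis .
qed

lemma lle_refl: "lgroup G \<Longrightarrow> a \<in> carrier G \<Longrightarrow> lle G a a"
  by (simp add: lle_def meet_idem)

lemma lle_trans: "lgroup G \<Longrightarrow> a \<in> carrier G \<Longrightarrow> b \<in> carrier G \<Longrightarrow> c \<in> carrier G \<Longrightarrow>
   lle G a b \<Longrightarrow> lle G b c \<Longrightarrow> lle G a c"
  unfolding lle_def proof -
  assume L: "lgroup G" and c: "a \<in> carrier G" "b \<in> carrier G" "c \<in> carrier G"
    and 1: "meet G a b = a" and 2: "meet G b c = b"
  have "meet G a c = meet G (meet G a b) c" using 1 by simp
  also have "\<dots> = meet G a (meet G b c)" using lg_ma[OF L c] .
  also have "\<dots> = a" using 1 2 by simp
  finally show "meet G a c = a" .
qed

lemma lle_antisym: "lgroup G \<Longrightarrow> a \<in> carrier G \<Longrightarrow> b \<in> carrier G \<Longrightarrow>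
   lle G a b \<Longrightarrow> lle G b a \<Longrightarrow> a = b"
  unfolding lle_def proof -
  assume L: "lgroup G" and c: "a \<in> carrier G" "b \<in> carrier G"
    and 1: "meet G a b = a" and 2: "meet G b a = b"
  show "a = b" using 1 2 lg_mc[OF L c] by simp
qed

lemma lle_join1: "lgroup G \<Longrightarrow> a \<in> carrier G \<Longrightarrow> b \<in> carrier G \<Longrightarrow> lle G a (join G a b)"
  unfolding lle_def by (rule lg_ab2)

lemma lle_join2: "lgroup G \<Longrightarrow> a \<in> carrier G \<Longrightarrow> b \<in> carrier G \<Longrightarrow> lle G b (join G a b)"
  unfolding lle_def proof -
  assume L: "lgroup G" and c: "a \<in> carrier G" "b \<in> carrier G"
  show "meet G b (join G a b) = b" using lg_jc[OF L c] lg_ab2[OF L c(2) c(1)] by simp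
qed

lemma lle_join_iff: "lgroup G \<Longrightarrow> a \<in> carrier G \<Longrightarrow> c \<in> carrier G \<Longrightarrow> lle G a c \<longleftrightarrow> join G a c = c"
  unfolding lle_def proof -
  assume L: "lgroup G" and c: "a \<in> carrier G" "c \<in> carrier G"
  show "meet G a c = a \<longleftrightarrow> join G a c = c"
  proof
    assume 1: "meet G a c = a"
    have "join G a c = join G c (meet G c a)" using 1 lg_mc[OF L c] lg_jc[OF L c] by simp
    also have "\<dots> = c" using lg_ab1[OF L c(2) c(1)] .
    finally show "join G a c = c" .
  next
    assume 1: "join G a c = c"
    show "meet G a c = a" using lg_ab2[OF L c] 1 by simp
  qed
qed

lemma join_least: "lgroup G \<Longrightarrow> a \<in> carrier G \<Longrightarrow> b \<in> carrier G \<Longrightarrow> c \<in> carrier G \<Longrightarrow>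
   lle G a c \<Longrightarrow> lle G b c \<Longrightarrow> lle G (join G a b) c"
  by (simp add: lle_join_iff lg_join_c lg_ja)

lemma meet_lower1: "lgroup G \<Longrightarrow> a \<in> carrier G \<Longrightarrow> b \<in> carrier G \<Longrightarrow> lle G (meet G a b) a"
  unfolding lle_def proof -
  assume L: "lgroup G" and c: "a \<in> carrier G" "b \<in> carrier G"
  have "meet G (meet G a b) a = meet G a (meet G a b)" using lg_mc[OF L lg_meet_c[OF L c] c(1)] .
  also have "\<dots> = meet G (meet G a a) b" using lg_ma[OF L c(1) c(1) c(2)] by simp
  also have "\<dots> = meet G a b" using meet_idem[OF L c(1)] by simp
  finally show "meet G (meet G a b) a = meet G a b" .
qed

lemma meet_lower2: "lgroup G \<Longrightarrow> a \<in> carrier G \<Longrightarrow> b \<in> carrier G \<Longrightarrow> lle G (meet G a b) b"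
  using lg_mc[of G a b] meet_lower1[of G b a] by simp

lemma lub_unique: "lgroup G \<Longrightarrow> is_lub G A s \<Longrightarrow> is_lub G A t \<Longrightarrow> s = t"
  unfolding is_lub_def is_ub_def by (meson lle_antisym)

section \<open>Variety side\<close>

lemma var_lgroup: "in_variety V \<Longrightarrow> lgroup V" by (simp add: in_variety_def)

lemma var_c: "in_variety V \<Longrightarrow> g \<in> carrier V \<Longrightarrow> range f \<subseteq> carrier V \<Longrightarrow> vsup V g f \<in> carrier V"
  unfolding in_variety_def by blast

lemma var_A1: "in_variety V \<Longrightarrow> g \<in> carrier V \<Longrightarrow> range f \<subseteq> carrier V \<Longrightarrow>
   vsup V g f = vsup V g (\<lambda>n. meet V (f n) g)"
  unfolding in_variety_def by blast

lemma var_A2: "in_variety V \<Longrightarrow> g \<in> carrier V \<Longrightarrow> range f \<subseteq> carrier V \<Longrightarrow>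
   vsup V g f = join V (meet V (f 0) g) (vsup V g (\<lambda>n. f (Suc n)))"
  unfolding in_variety_def by blast

lemma var_A3: "in_variety V \<Longrightarrow> g \<in> carrier V \<Longrightarrow> h \<in> carrier V \<Longrightarrow> range f \<subseteq> carrier V \<Longrightarrow>
   lle V (vsup V g (\<lambda>n. meet V (f n) h)) h"
  unfolding in_variety_def by blast

lemma vsup_ge:
  assumes V: "in_variety V" and g: "g \<in> carrier V"
  shows "range f \<subseteq> carrier V \<Longrightarrow> lle V (meet V (f k) g) (vsup V g f)"
proof (induction k arbitrary: f)
  case 0
  have L: "lgroup V" using V by (rule var_lgroup)
  have r: "range (\<lambda>n. f (Suc n)) \<subseteq> carrier V" using 0 by auto
  have "f 0 \<in> carrier V" using 0 by auto
  then show ?case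
    using var_A2[OF V g 0] lle_join1[OF L lg_meet_c[OF L _ g] var_c[OF V g r]] by simp
next
  case (Suc k)
  have L: "lgroup V" using V by (rule var_lgroup)
  have r: "range (\<lambda>n. f (Suc n)) \<subseteq> carrier V" using Suc.prems by auto
  have f0: "f 0 \<in> carrier V" "f (Suc k) \<in> carrier V" using Suc.prems by auto
  have 1: "lle V (meet V (f (Suc k)) g) (vsup V g (\<lambda>n. f (Suc n)))" using Suc.IH[OF r] by simp
  have 2: "lle V (vsup V g (\<lambda>n. f (Suc n))) (vsup V g f)"
    using var_A2[OF V g Suc.prems] lle_join2[OF L lg_meet_c[OF L f0(1) g] var_c[OF V g r]] by simp
  show ?case
    by (rule lle_trans[OF L lg_meet_c[OF L f0(2) g] var_c[OF V g r] var_c[OF V g Suc.prems] 1 2])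
qed

lemma vsup_lub:
  assumes V: "in_variety V" and f: "range f \<subseteq> carrier V" and u: "is_ub V (range f) u"
  shows "is_lub V (range f) (vsup V u f)"
proof -
  have L: "lgroup V" using V by (rule var_lgroup)
  have uc: "u \<in> carrier V" using u by (simp add: is_ub_def)
  have fu: "\<And>n. meet V (f n) u = f n" using u by (auto simp: is_ub_def lle_def)
  have ub: "is_ub V (range f) (vsup V u f)"
    unfolding is_ub_def using var_c[OF V uc f] vsup_ge[OF V uc f] fu by auto
  moreover have "lle V (vsup V u f) w" if w: "is_ub V (range f) w" for w
  proof -
    have wc: "w \<in> carrier V" using w by (simp add: is_ub_def)
    have fw: "(\<lambda>n. meet V (f n) w) = f" using w by (auto simp: is_ub_def lle_def)
    show ?thesis using var_A3[OF V uc wc f] fw by simp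
  qed
  ultimately show ?thesis by (simp add: is_lub_def)
qed

lemma F_simps[simp]:
  "carrier (F_obj G) = carrier G" "zero (F_obj G) = zero G" "add (F_obj G) = add G"
  "neg (F_obj G) = neg G" "join (F_obj G) = join G" "meet (F_obj G) = meet G"
  "vsup (F_obj G) = sup_op G"
  by (simp_all add: F_obj_def lgrp.defs vsl.defs)

lemma U_simps[simp]:
  "carrier (U_obj V) = carrier V" "zero (U_obj V) = zero V" "add (U_obj V) = add V"
  "neg (U_obj V) = neg V" "join (U_obj V) = join V" "meet (U_obj V) = meet V"
  by (simp_all add: U_obj_def lgrp.defs vsl.defs)

lemma F_lgroup[simp]: "lgroup (F_obj G) = lgroup G" by (simp add: lgroup_def)
lemma U_lgroup[simp]: "lgroup (U_obj V) = lgroup V" by (simp add: lgroup_def)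
lemma F_lle[simp]: "lle (F_obj G) = lle G" by (simp add: lle_def[abs_def])
lemma U_lle[simp]: "lle (U_obj V) = lle V" by (simp add: lle_def[abs_def])
lemma F_ub[simp]: "is_ub (F_obj G) = is_ub G" by (simp add: is_ub_def[abs_def])
lemma U_ub[simp]: "is_ub (U_obj V) = is_ub V" by (simp add: is_ub_def[abs_def])
lemma F_lub[simp]: "is_lub (F_obj G) = is_lub G" by (simp add: is_lub_def[abs_def])
lemma U_lub[simp]: "is_lub (U_obj V) = is_lub V" by (simp add: is_lub_def[abs_def])

section \<open>sigma-complete side\<close>

lemma sup_op_lub:
  assumes S: "sigma_complete G" and g: "g \<in> carrier G" and f: "range f \<subseteq> carrier G"
  shows "is_lub G (range (\<lambda>n. meet G (f n) g)) (sup_op G g f)"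
proof -
  have L: "lgroup G" using S unfolding sigma_complete_def by (rule conjunct1)
  have r: "range (\<lambda>n. meet G (f n) g) \<subseteq> carrier G" using f g lg_meet_c[OF L] by auto
  have "is_ub G (range (\<lambda>n. meet G (f n) g)) g"
    unfolding is_ub_def using g f meet_lower2[OF L] by auto
  then obtain s where s: "is_lub G (range (\<lambda>n. meet G (f n) g)) s"
    using S r unfolding sigma_complete_def by blast
  show ?thesis unfolding sup_op_def
    by (rule theI[of _ s]) (use s lub_unique[OF L] in blast)+
qed

lemma lub_c: "is_lub G A s \<Longrightarrow> s \<in> carrier G" by (simp add: is_lub_def is_ub_def)

lemma F_variety:
  assumes S: "sigma_complete G"
  shows "in_variety (F_obj G)"
proof -
  have L: "lgroup G" using S unfolding sigma_complete_def by (rule conjunct1)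
  have C: "\<forall>g\<in>carrier G. \<forall>f. range f \<subseteq> carrier G \<longrightarrow> sup_op G g f \<in> carrier G"
  proof (intro ballI allI impI)
    fix g and f :: "nat \<Rightarrow> 'a" assume g: "g \<in> carrier G" and f: "range f \<subseteq> carrier G"
    show "sup_op G g f \<in> carrier G" using sup_op_lub[OF S g f] by (rule lub_c)
  qed
  have A1: "sup_op G g f = sup_op G g (\<lambda>n. meet G (f n) g)"
    if g: "g \<in> carrier G" and f: "range f \<subseteq> carrier G" for g f
  proof -
    have "(\<lambda>n. meet G (meet G (f n) g) g) = (\<lambda>n. meet G (f n) g)"
    proof
      fix n
      have fn: "f n \<in> carrier G" using f by auto
      show "meet G (meet G (f n) g) g = meet G (f n) g"
        using lg_ma[OF L fn g g] meet_idem[OF L g] by simp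
    qed
    then show ?thesis unfolding sup_op_def by (simp only:)
  qed
  have A2: "sup_op G g f = join G (meet G (f 0) g) (sup_op G g (\<lambda>n. f (Suc n)))"
    if g: "g \<in> carrier G" and f: "range f \<subseteq> carrier G" for g f
  proof -
    have r: "range (\<lambda>n. f (Suc n)) \<subseteq> carrier G" using f by auto
    have fc: "\<And>n. f n \<in> carrier G" using f by auto
    define a where "a = meet G (f 0) g"
    define t where "t = sup_op G g (\<lambda>n. f (Suc n))"
    have ac: "a \<in> carrier G" unfolding a_def using fc g lg_meet_c[OF L] by auto
    have tl: "is_lub G (range (\<lambda>n. meet G (f (Suc n)) g)) t"
      unfolding t_def using sup_op_lub[OF S g r] .
    have tc: "t \<in> carrier G" by (rule lub_c[OF tl])
    have jc: "join G a t \<in> carrier G" using ac tc lg_join_c[OF L] by blast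
    have "is_lub G (range (\<lambda>n. meet G (f n) g)) (join G a t)"
    proof -
      have ub: "lle G (meet G (f n) g) (join G a t)" for n
      proof (cases n)
        case 0 then show ?thesis using lle_join1[OF L ac tc] a_def by simp
      next
        case (Suc m)
        have "lle G (meet G (f (Suc m)) g) t" using tl by (auto simp: is_lub_def is_ub_def)
        then show ?thesis using Suc lle_trans[OF L lg_meet_c[OF L fc g] tc jc] lle_join2[OF L ac tc] by simp
      qed
      have least: "lle G (join G a t) w" if w: "is_ub G (range (\<lambda>n. meet G (f n) g)) w" for w
      proof -
        have wc: "w \<in> carrier G" using w by (simp add: is_ub_def)
        have "lle G a w" using w a_def by (auto simp: is_ub_def)
        moreover have "is_ub G (range (\<lambda>n. meet G (f (Suc n)) g)) w" using w by (auto simp: is_ub_def)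
        then have "lle G t w" using tl by (simp add: is_lub_def)
        ultimately show ?thesis using join_least[OF L ac tc wc] by blast
      qed
      have "is_ub G (range (\<lambda>n. meet G (f n) g)) (join G a t)"
        unfolding is_ub_def using jc ub by auto
      then show ?thesis unfolding is_lub_def using least by blast
    qed
    then show ?thesis using lub_unique[OF L] sup_op_lub[OF S g f] a_def t_def by blast
  qed
  have A3: "lle G (sup_op G g (\<lambda>n. meet G (f n) h)) h"
    if g: "g \<in> carrier G" and h: "h \<in> carrier G" and f: "range f \<subseteq> carrier G" for g h f
  proof -
    have fc: "\<And>n. f n \<in> carrier G" using f by auto
    have r: "range (\<lambda>n. meet G (f n) h) \<subseteq> carrier G" using fc h lg_meet_c[OF L] by auto
    have "is_ub G (range (\<lambda>n. meet G (meet G (f n) h) g)) h"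
      unfolding is_ub_def using h
      by (auto intro: lle_trans[OF L _ _ h, OF _ _ meet_lower1[OF L] meet_lower2[OF L]]
               simp: fc g lg_meet_c[OF L])
    then show ?thesis using sup_op_lub[OF S g r] by (simp add: is_lub_def)
  qed
  show ?thesis unfolding in_variety_def F_simps F_lgroup F_lle
    apply (intro conjI ballI allI impI)
        apply (fact L)
       apply (rule C[rule_format]; assumption)
      apply (rule A1; assumption)
     apply (rule A2; assumption)
    apply (rule A3; assumption)
    done
qed

theorem mainTheorem1:
  shows
    "(\<forall>V :: 'a vsl. in_variety V \<longrightarrow> sigma_complete (U_obj V)) \<and>
     (\<forall>(V :: 'a vsl) (W :: 'b vsl) h. in_variety V \<and> in_variety W \<and> v_morphism V W h
        \<longrightarrow> sigma_continuous (U_obj V) (U_obj W) h) \<and>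
     (\<forall>G :: 'a lgrp. sigma_complete G \<longrightarrow> in_variety (F_obj G)) \<and>
     (\<forall>(G :: 'a lgrp) (H :: 'b lgrp) h. sigma_complete G \<and> sigma_complete H \<and> sigma_continuous G H h
        \<longrightarrow> v_morphism (F_obj G) (F_obj H) h) \<and>
     (\<forall>G :: 'a lgrp. sigma_complete G \<longrightarrow> U_obj (F_obj G) = G) \<and>
     (\<forall>V :: 'a vsl. in_variety V \<longrightarrow>
        (\<forall>g\<in>carrier V. \<forall>f. range f \<subseteq> carrier V \<longrightarrow> vsup (F_obj (U_obj V)) g f = vsup V g f) \<and>
        lgrp.truncate (F_obj (U_obj V)) = lgrp.truncate V)"
proof (intro conjI allI impI)
  fix V :: "'a vsl" assume V: "in_variety V"
  show "sigma_complete (U_obj V)"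
    unfolding sigma_complete_def using var_lgroup[OF V] vsup_lub[OF V] by auto
next
  fix V :: "'a vsl" and W :: "'b vsl" and h
  assume a: "in_variety V \<and> in_variety W \<and> v_morphism V W h"
  then have V: "in_variety V" and W: "in_variety W" and hm: "v_morphism V W h" by auto
  have LV: "lgroup V" using V by (rule var_lgroup)
  have lm: "l_morphism V W h" using hm by (simp add: v_morphism_def)
  have hc: "\<And>x. x \<in> carrier V \<Longrightarrow> h x \<in> carrier W" using lm by (simp add: l_morphism_def)
  have hmeet: "\<And>x y. x \<in> carrier V \<Longrightarrow> y \<in> carrier V \<Longrightarrow> h (meet V x y) = meet W (h x) (h y)"
    using lm by (simp add: l_morphism_def)
  have "is_lub W (range (h \<circ> f)) (h s)" if f: "range f \<subseteq> carrier V" and s: "is_lub V (range f) s" for f :: "nat \<Rightarrow> 'a" and s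
  proof -
    have sc: "s \<in> carrier V" by (rule lub_c[OF s])
    have sub: "is_ub V (range f) s" using s by (simp add: is_lub_def)
    have e: "s = vsup V s f" using lub_unique[OF LV s vsup_lub[OF V f sub]] .
    have "h (vsup V s f) = vsup W (h s) (h \<circ> f)" using hm sc f unfolding v_morphism_def by blast
    then have hs: "h s = vsup W (h s) (h \<circ> f)" using e by metis
    have r: "range (h \<circ> f) \<subseteq> carrier W" using f hc by auto
    have "is_ub W (range (h \<circ> f)) (h s)"
    proof -
      have "meet W (h (f n)) (h s) = h (f n)" for n
      proof -
        have fn: "f n \<in> carrier V" using f by auto
        have "meet V (f n) s = f n" using sub by (auto simp: is_ub_def lle_def)
        then show ?thesis using hmeet[OF fn sc] by simp
      qed
      then show ?thesis unfolding is_ub_def lle_def using hc[OF sc] by auto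
    qed
    from vsup_lub[OF W r this] show ?thesis using hs by metis
  qed
  then show "sigma_continuous (U_obj V) (U_obj W) h"
    unfolding sigma_continuous_def using lm by (simp add: l_morphism_def)
next
  fix G :: "'a lgrp" assume "sigma_complete G"
  then show "in_variety (F_obj G)" by (rule F_variety)
next
  fix G :: "'a lgrp" and H :: "'b lgrp" and h
  assume a: "sigma_complete G \<and> sigma_complete H \<and> sigma_continuous G H h"
  then have SG: "sigma_complete G" and SH: "sigma_complete H" and hs: "sigma_continuous G H h" by auto
  have LH: "lgroup H" using SH unfolding sigma_complete_def by (rule conjunct1)
  have lm: "l_morphism G H h" using hs by (simp add: sigma_continuous_def)
  have hc: "\<And>x. x \<in> carrier G \<Longrightarrow> h x \<in> carrier H" using lm by (simp add: l_morphism_def)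
  have hmeet: "\<And>x y. x \<in> carrier G \<Longrightarrow> y \<in> carrier G \<Longrightarrow> h (meet G x y) = meet H (h x) (h y)"
    using lm by (simp add: l_morphism_def)
  have LG: "lgroup G" using SG unfolding sigma_complete_def by (rule conjunct1)
  have "h (sup_op G g f) = sup_op H (h g) (h \<circ> f)"
    if g: "g \<in> carrier G" and f: "range f \<subseteq> carrier G" for g f
  proof -
    have fc: "\<And>n. f n \<in> carrier G" using f by auto
    have r: "range (\<lambda>n. meet G (f n) g) \<subseteq> carrier G" using fc g lg_meet_c[OF LG] by auto
    have "is_lub H (range (h \<circ> (\<lambda>n. meet G (f n) g))) (h (sup_op G g f))"
      using hs r sup_op_lub[OF SG g f] by (simp add: sigma_continuous_def)
    moreover have "h \<circ> (\<lambda>n. meet G (f n) g) = (\<lambda>n. meet H ((h \<circ> f) n) (h g))"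
      using fc g hmeet by auto
    moreover have r2: "range (h \<circ> f) \<subseteq> carrier H" using f hc by auto
    ultimately show ?thesis using lub_unique[OF LH] sup_op_lub[OF SH hc[OF g] r2] by metis
  qed
  then show "v_morphism (F_obj G) (F_obj H) h"
    unfolding v_morphism_def using lm by (simp add: l_morphism_def)
next
  fix G :: "'a lgrp"
  show "U_obj (F_obj G) = G" by (simp add: U_obj_def F_obj_def lgrp.defs vsl.defs)
next
  fix V :: "'a vsl" assume V: "in_variety V"
  show "\<forall>g\<in>carrier V. \<forall>f. range f \<subseteq> carrier V \<longrightarrow> vsup (F_obj (U_obj V)) g f = vsup V g f"
  proof (intro ballI allI impI)
    fix g and f :: "nat \<Rightarrow> 'a" assume g: "g \<in> carrier V" and f: "range f \<subseteq> carrier V"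
    have LV: "lgroup V" using V by (rule var_lgroup)
    have S: "sigma_complete (U_obj V)"
      unfolding sigma_complete_def using var_lgroup[OF V] vsup_lub[OF V] by auto
    have r: "range (\<lambda>n. meet V (f n) g) \<subseteq> carrier V" using f g lg_meet_c[OF LV] by auto
    have ub: "is_ub V (range (\<lambda>n. meet V (f n) g)) g"
      unfolding is_ub_def using g f meet_lower2[OF LV] by auto
    have "is_lub V (range (\<lambda>n. meet V (f n) g)) (sup_op (U_obj V) g f)"
      using sup_op_lub[OF S] g f by simp
    then have e: "sup_op (U_obj V) g f = vsup V g (\<lambda>n. meet V (f n) g)"
      using lub_unique[OF LV _ vsup_lub[OF V r ub]] by blast
    show "vsup (F_obj (U_obj V)) g f = vsup V g f" unfolding F_simps e using var_A1[OF V g f] by (rule sym)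
  qed
  show "lgrp.truncate (F_obj (U_obj V)) = lgrp.truncate V"
    by (simp add: U_obj_def F_obj_def lgrp.defs vsl.defs)
qed

end
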